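(* Let $\Omega\subset\mathbb R^n$ be a bounded open set with $C^2$ boundary and let $u:\overline\Omega\to\mathbb R$ be Lipschitz continuous and semiconcave with modulus $\omega$ in $\overline\Omega$. Let $x\in\partial\Omega$ and let $\nu(x)$ be the outward unit normal to $\partial\Omega$ at $x$. Then for every $\theta\in\mathbb R^n$ with $\langle\theta,\nu(x)\rangle\le0$, $$\partial^\uparrow u(x;\theta)=\min_{p\in D^+u(x)}\langle p,\theta\rangle=\partial^\downarrow u(x;\theta).$$
   Context: A modulus is a nondecreasing upper semicontinuous $\omega:\mathbb R_+\to\mathbb R_+$ with $\omega(r)\to0$ as $r\to0^+$. $u$ is semiconcave with modulus $\omega$ on $\overline\Omega$ if $\lambda u(x)+(1-\lambda)u(y)-u(\lambda x+(1-\lambda)y)\le\lambda(1-\lambda)|x-y|\omega(|x-y|)$ for all $x,y\in\overline\Omega$ with $[x,y]\subset\overline\Omega$ and all $\lambda\in[0,1]$. $D^+u(x)=\{p:\limsup_{y\to x,\,y\in\overline\Omega}\frac{u(y)-u(x)-\langle p,y-x\rangle}{|y-x|}\le0\}$. Upper and lower Dini derivatives: $\partial^\uparrow u(x;\theta)=\limsup\frac{u(x+h\theta')-u(x)}{h}$ and $\partial^\downarrow u(x;\theta)=\liminf\frac{u(x+h\theta')-u(x)}{h}$, both taken as $h\to0^+$, $\theta'\to\theta$ with $x+h\theta'\in\overline\Omega$. *)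

theory Defs
  imports "HOL-Analysis.Analysis" "HOL-Library.Liminf_Limsup"
begin

definition usc_on :: "real set \<Rightarrow> (real \<Rightarrow> real) \<Rightarrow> bool" where
  "usc_on S f \<longleftrightarrow> (\<forall>t\<in>S. \<forall>e>0. \<exists>d>0. \<forall>s\<in>S. \<bar>s - t\<bar> < d \<longrightarrow> f s < f t + e)"

definition modulus :: "(real \<Rightarrow> real) \<Rightarrow> bool" where
  "modulus \<omega> \<longleftrightarrow> mono_on {0..} \<omega> \<and> usc_on {0..} \<omega> \<and> (\<forall>r\<ge>0. \<omega> r \<ge> 0)
     \<and> (\<omega> \<longlongrightarrow> 0) (at_right 0)"

definition semiconcave_with :: "('a::euclidean_space) set \<Rightarrow> (real \<Rightarrow> real) \<Rightarrow> ('a \<Rightarrow> real) \<Rightarrow> bool" where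
  "semiconcave_with K \<omega> u \<longleftrightarrow>
     (\<forall>x\<in>K. \<forall>y\<in>K. closed_segment x y \<subseteq> K \<longrightarrow> (\<forall>l\<in>{0..1::real}.
        l * u x + (1 - l) * u y - u (l *\<^sub>R x + (1 - l) *\<^sub>R y)
          \<le> l * (1 - l) * norm (x - y) * \<omega> (norm (x - y))))"

definition superdiff :: "('a::euclidean_space) set \<Rightarrow> ('a \<Rightarrow> real) \<Rightarrow> 'a \<Rightarrow> 'a set" where
  "superdiff K u x = {p. Limsup (at x within K)
       (\<lambda>y. ereal ((u y - u x - inner p (y - x)) / norm (y - x))) \<le> 0}"

definition dini_filter :: "('a::euclidean_space) set \<Rightarrow> 'a \<Rightarrow> 'a \<Rightarrow> (real \<times> 'a) filter" where
  "dini_filter K x \<theta> = inf (at_right 0 \<times>\<^sub>F nhds \<theta>) (principal {(h, \<theta>'). x + h *\<^sub>R \<theta>' \<in> K})"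

definition dini_upper :: "('a::euclidean_space) set \<Rightarrow> ('a \<Rightarrow> real) \<Rightarrow> 'a \<Rightarrow> 'a \<Rightarrow> ereal" where
  "dini_upper K u x \<theta> = Limsup (dini_filter K x \<theta>)
      (\<lambda>(h, \<theta>'). ereal ((u (x + h *\<^sub>R \<theta>') - u x) / h))"

definition dini_lower :: "('a::euclidean_space) set \<Rightarrow> ('a \<Rightarrow> real) \<Rightarrow> 'a \<Rightarrow> 'a \<Rightarrow> ereal" where
  "dini_lower K u x \<theta> = Liminf (dini_filter K x \<theta>)
      (\<lambda>(h, \<theta>'). ereal ((u (x + h *\<^sub>R \<theta>') - u x) / h))"

definition C2_on :: "('a::euclidean_space) set \<Rightarrow> ('a \<Rightarrow> real) \<Rightarrow> ('a \<Rightarrow> 'a) \<Rightarrow> bool" where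
  "C2_on S \<psi> g \<longleftrightarrow> (\<exists>H :: 'a \<Rightarrow> ('a \<Rightarrow>\<^sub>L 'a).
      (\<forall>y\<in>S. (\<psi> has_derivative (\<lambda>v. inner (g y) v)) (at y))
    \<and> (\<forall>y\<in>S. (g has_derivative blinfun_apply (H y)) (at y))
    \<and> continuous_on S H)"

definition local_defining_fun ::
    "('a::euclidean_space) set \<Rightarrow> 'a \<Rightarrow> real \<Rightarrow> ('a \<Rightarrow> real) \<Rightarrow> ('a \<Rightarrow> 'a) \<Rightarrow> bool" where
  "local_defining_fun \<Omega> x r \<psi> g \<longleftrightarrow> r > 0 \<and> C2_on (ball x r) \<psi> g
     \<and> (\<forall>y\<in>ball x r. g y \<noteq> 0) \<and> \<Omega> \<inter> ball x r = {y \<in> ball x r. \<psi> y < 0}"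

definition C2_boundary :: "('a::euclidean_space) set \<Rightarrow> bool" where
  "C2_boundary \<Omega> \<longleftrightarrow> (\<forall>x\<in>frontier \<Omega>. \<exists>r \<psi> g. local_defining_fun \<Omega> x r \<psi> g)"

definition outward_unit_normal :: "('a::euclidean_space) set \<Rightarrow> 'a \<Rightarrow> 'a \<Rightarrow> bool" where
  "outward_unit_normal \<Omega> x \<nu> \<longleftrightarrow>
     (\<exists>r \<psi> g. local_defining_fun \<Omega> x r \<psi> g \<and> \<nu> = g x /\<^sub>R norm (g x))"

end

theory Submission
  imports Defs
begin



lemma lim_exists_aux:
  fixes f c :: "real \<Rightarrow> real"
  assumes h0: "h0 > 0" and bnd: "\<And>h. 0 < h \<Longrightarrow> h \<le> h0 \<Longrightarrow> f h \<le> B"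
    and c0: "(c \<longlongrightarrow> 0) (at_right 0)"
    and mono: "\<And>s h. 0 < s \<Longrightarrow> s \<le> h \<Longrightarrow> h \<le> h0 \<Longrightarrow> f h - c h \<le> f s"
  shows "\<exists>l. (f \<longlongrightarrow> l) (at_right 0) \<and> (\<forall>h. 0 < h \<and> h \<le> h0 \<longrightarrow> f h - c h \<le> l)"
proof -
  define T where "T = (\<lambda>h. f h - c h) ` {0<..h0}"
  have ne: "T \<noteq> {}" using h0 by (auto simp: T_def)
  have bdd: "bdd_above T"
    unfolding T_def bdd_above_def using bnd mono by (intro exI[of _ B]) (force)
  define l where "l = Sup T"
  have up: "f h - c h \<le> l" if "0 < h" "h \<le> h0" for h
    unfolding l_def using that bdd by (intro cSup_upper) (auto simp: T_def)
  have "(f \<longlongrightarrow> l) (at_right 0)"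
  proof (rule tendstoI)
    fix e :: real assume e: "e > 0"
    have "l - e < Sup T" using e by (simp add: l_def)
    then obtain t where "t \<in> T" "l - e < t" using ne by (meson less_cSupE)
    then obtain h1 where h1: "0 < h1" "h1 \<le> h0" "l - e < f h1 - c h1" by (auto simp: T_def)
    have ev1: "eventually (\<lambda>s. dist (c s) 0 < e) (at_right 0)" using c0 e by (rule tendstoD)
    have ev2: "eventually (\<lambda>s. s \<in> {0<..<h1}) (at_right 0)" using h1 by (intro eventually_at_right_real) auto
    show "eventually (\<lambda>s. dist (f s) l < e) (at_right 0)"
      using ev1 ev2
    proof eventually_elim
      case (elim s)
      have "l - e < f s" using mono[of s h1] h1 elim by auto
      moreover have "f s - c s \<le> l" using up[of s] elim h1 by auto
      ultimately show ?case using elim by (auto simp: dist_real_def abs_less_iff)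
    qed
  qed
  then show ?thesis using up by blast
qed

lemma modulus_scaled_tendsto:
  assumes "modulus \<omega>" "c \<ge> 0"
  shows "((\<lambda>h. c * \<omega> (h * c)) \<longlongrightarrow> 0) (at_right 0)"
proof (cases "c = 0")
  case True then show ?thesis by simp
next
  case False
  then have cpos: "c > 0" using assms by simp
  have w: "(\<omega> \<longlongrightarrow> 0) (at_right 0)" using assms by (simp add: modulus_def)
  have "filterlim (\<lambda>h. h * c) (at_right 0) (at_right 0)"
  proof (subst filterlim_at, intro conjI)
    show "\<forall>\<^sub>F h in at_right 0. h * c \<in> {0<..} \<and> h * c \<noteq> 0"
      using cpos by (auto simp: eventually_at_right_field intro!: exI[of _ 1])
    show "((\<lambda>h. h * c) \<longlongrightarrow> 0) (at_right 0)"
      by (auto intro!: tendsto_eq_intros)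
  qed
  then have "((\<lambda>h. \<omega> (h * c)) \<longlongrightarrow> 0) (at_right 0)"
    by (rule filterlim_compose[OF w])
  then show ?thesis by (auto intro: tendsto_mult_right_zero)
qed


lemma filterlim_scale_at_right:
  fixes c :: real assumes "c > 0"
  shows "filterlim (\<lambda>h. h * c) (at_right 0) (at_right 0)"
proof (subst filterlim_at, intro conjI)
  show "\<forall>\<^sub>F h in at_right 0. h * c \<in> {0<..} \<and> h * c \<noteq> 0"
    using assms by (auto simp: eventually_at_right_field intro!: exI[of _ 1])
  show "((\<lambda>h. h * c) \<longlongrightarrow> 0) (at_right 0)"
    by (auto intro!: tendsto_eq_intros)
qed

locale SC =
  fixes K :: "'a::euclidean_space set" and u :: "'a \<Rightarrow> real" and \<omega> :: "real \<Rightarrow> real"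
    and L :: real and x \<nu> :: 'a
  assumes lip: "L-lipschitz_on K u"
    and md: "modulus \<omega>"
    and sc: "semiconcave_with K \<omega> u"
    and xK: "x \<in> K"
    and nu1: "norm \<nu> = 1"
    and geo: "\<And>\<epsilon>. \<epsilon> > 0 \<Longrightarrow> \<exists>\<rho>>0. (\<forall>y\<in>K. norm (y - x) < \<rho> \<longrightarrow> inner \<nu> (y - x) \<le> \<epsilon> * norm (y - x))
       \<and> (\<forall>z. norm (z - x) < \<rho> \<and> inner \<nu> (z - x) + \<epsilon> * norm (z - x) \<le> 0 \<longrightarrow> z \<in> K)"
begin

definition Q :: "real \<Rightarrow> 'a \<Rightarrow> real" where "Q h v = (u (x + h *\<^sub>R v) - u x) / h"
definition d :: "'a \<Rightarrow> real" where "d v = Lim (at_right 0) (\<lambda>h. Q h v)"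
definition Cone :: "'a set" where "Cone = {w. inner \<nu> w < 0}"

lemma L0: "L \<ge> 0" using lip by (simp add: lipschitz_on_def)

lemma om0: "r \<ge> 0 \<Longrightarrow> \<omega> r \<ge> 0" using md by (simp add: modulus_def)

lemma ulip: "y \<in> K \<Longrightarrow> z \<in> K \<Longrightarrow> \<bar>u y - u z\<bar> \<le> L * norm (y - z)"
  using lipschitz_onD[OF lip, of y z] by (simp add: dist_norm dist_real_def)

lemma Gam:
  assumes "\<epsilon> > 0"
  shows "\<exists>\<rho>>0. (\<forall>y\<in>K. norm (y - x) < \<rho> \<longrightarrow> inner \<nu> (y - x) \<le> \<epsilon> * norm (y - x))
     \<and> convex {z. norm (z - x) < \<rho> \<and> inner \<nu> (z - x) + \<epsilon> * norm (z - x) \<le> 0}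
     \<and> {z. norm (z - x) < \<rho> \<and> inner \<nu> (z - x) + \<epsilon> * norm (z - x) \<le> 0} \<subseteq> K"
proof -
  obtain \<rho> where \<rho>: "\<rho> > 0" "\<forall>y\<in>K. norm (y - x) < \<rho> \<longrightarrow> inner \<nu> (y - x) \<le> \<epsilon> * norm (y - x)"
     "\<forall>z. norm (z - x) < \<rho> \<and> inner \<nu> (z - x) + \<epsilon> * norm (z - x) \<le> 0 \<longrightarrow> z \<in> K"
    using geo[OF assms] by blast
  have cv: "convex {z. norm (z - x) < \<rho> \<and> inner \<nu> (z - x) + \<epsilon> * norm (z - x) \<le> 0}"
    unfolding convex_def
  proof (intro ballI allI impI)
    fix z1 z2 and a b :: real
    assume z1: "z1 \<in> {z. norm (z - x) < \<rho> \<and> inner \<nu> (z - x) + \<epsilon> * norm (z - x) \<le> 0}"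
      and z2: "z2 \<in> {z. norm (z - x) < \<rho> \<and> inner \<nu> (z - x) + \<epsilon> * norm (z - x) \<le> 0}"
      and ab: "0 \<le> a" "0 \<le> b" "a + b = 1"
    have eq: "a *\<^sub>R z1 + b *\<^sub>R z2 - x = a *\<^sub>R (z1 - x) + b *\<^sub>R (z2 - x)"
      using ab by (simp add: algebra_simps flip: scaleR_add_left)
    have nle: "norm (a *\<^sub>R z1 + b *\<^sub>R z2 - x) \<le> a * norm (z1 - x) + b * norm (z2 - x)"
      unfolding eq using norm_triangle_ineq[of "a *\<^sub>R (z1 - x)" "b *\<^sub>R (z2 - x)"] ab by simp
    have "a * norm (z1 - x) + b * norm (z2 - x) < a * \<rho> + b * \<rho>"
    proof (cases "a = 0")
      case True then show ?thesis using ab z2 by simp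
    next
      case False then have "a > 0" using ab by simp
      then have "a * norm (z1 - x) < a * \<rho>" using z1 by simp
      moreover have "b * norm (z2 - x) \<le> b * \<rho>" using z2 ab by (intro mult_left_mono) auto
      ultimately show ?thesis by simp
    qed
    also have "\<dots> = \<rho>" using ab by (simp flip: distrib_right)
    finally have n1: "norm (a *\<^sub>R z1 + b *\<^sub>R z2 - x) < \<rho>" using nle by simp
    have "inner \<nu> (a *\<^sub>R z1 + b *\<^sub>R z2 - x) + \<epsilon> * norm (a *\<^sub>R z1 + b *\<^sub>R z2 - x)
       \<le> a * (inner \<nu> (z1 - x) + \<epsilon> * norm (z1 - x)) + b * (inner \<nu> (z2 - x) + \<epsilon> * norm (z2 - x))"
      using mult_left_mono[OF nle, of \<epsilon>] assms unfolding eq by (simp add: inner_add_right algebra_simps)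
    also have "\<dots> \<le> 0" using z1 z2 ab by (simp add: add_nonpos_nonpos mult_nonneg_nonpos)
    finally show "a *\<^sub>R z1 + b *\<^sub>R z2 \<in> {z. norm (z - x) < \<rho> \<and> inner \<nu> (z - x) + \<epsilon> * norm (z - x) \<le> 0}"
      using n1 by simp
  qed
  show ?thesis using \<rho> cv by blast
qed

lemma seg_sub:
  assumes "0 \<le> h" "h \<le> h0"
  shows "closed_segment x (x + h *\<^sub>R v) \<subseteq> closed_segment x (x + h0 *\<^sub>R v)"
proof (rule closed_segment_subset)
  show "x + h *\<^sub>R v \<in> closed_segment x (x + h0 *\<^sub>R v)"
  proof (cases "h0 = 0")
    case True then show ?thesis using assms by simp
  next
    case False
    then have h0: "h0 > 0" using assms by simp
    show ?thesis unfolding in_segment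
      using assms h0 by (intro exI[of _ "h / h0"]) (auto simp: algebra_simps)
  qed
qed auto

lemma Q_bound:
  assumes "0 < h" "x + h *\<^sub>R v \<in> K"
  shows "\<bar>Q h v\<bar> \<le> L * norm v"
proof -
  have "\<bar>u (x + h *\<^sub>R v) - u x\<bar> \<le> L * (h * norm v)" using ulip[OF assms(2) xK] assms by simp
  then show ?thesis using assms unfolding Q_def by (simp add: abs_divide divide_le_eq algebra_simps)
qed

lemma Q_mono:
  assumes seg: "closed_segment x (x + h *\<^sub>R v) \<subseteq> K" and s: "0 < s" "s \<le> h"
  shows "Q h v - norm v * \<omega> (h * norm v) \<le> Q s v"
proof -
  have h: "h > 0" using s by simp
  define l where "l = s / h"
  have l01: "l \<in> {0..1}" using s h by (auto simp: l_def)
  have XK: "x + h *\<^sub>R v \<in> K" using seg by auto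
  have seg': "closed_segment (x + h *\<^sub>R v) x \<subseteq> K" using seg by (simp add: closed_segment_commute)
  have "l * u (x + h *\<^sub>R v) + (1 - l) * u x - u (l *\<^sub>R (x + h *\<^sub>R v) + (1 - l) *\<^sub>R x)
      \<le> l * (1 - l) * norm (x + h *\<^sub>R v - x) * \<omega> (norm (x + h *\<^sub>R v - x))"
    using sc XK xK seg' l01 unfolding semiconcave_with_def by blast
  moreover have "l *\<^sub>R (x + h *\<^sub>R v) + (1 - l) *\<^sub>R x = x + s *\<^sub>R v"
    using h by (simp add: l_def algebra_simps)
  moreover have "norm (x + h *\<^sub>R v - x) = h * norm v" using h by simp
  ultimately have ineq: "l * u (x + h *\<^sub>R v) + (1 - l) * u x - u (x + s *\<^sub>R v) \<le> l * (1 - l) * (h * norm v) * \<omega> (h * norm v)"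
    using h by (simp add: abs_of_pos)
  have om: "\<omega> (h * norm v) \<ge> 0" using h by (intro om0) simp
  have "l * (1 - l) * (h * norm v) * \<omega> (h * norm v) \<le> l * (h * norm v) * \<omega> (h * norm v)"
    using l01 om h by (intro mult_right_mono) (auto simp: mult_le_cancel_left1 intro!: mult_left_le)
  with ineq have "l * (u (x + h *\<^sub>R v) - u x) - (u (x + s *\<^sub>R v) - u x) \<le> l * (h * norm v) * \<omega> (h * norm v)"
    by (simp add: algebra_simps)
  moreover have "s * (Q h v - Q s v) = l * (u (x + h *\<^sub>R v) - u x) - (u (x + s *\<^sub>R v) - u x)"
    using h s by (simp add: Q_def l_def field_simps)
  moreover have "s * (norm v * \<omega> (h * norm v)) = l * (h * norm v) * \<omega> (h * norm v)"
    using h by (simp add: l_def)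
  ultimately have "s * (Q h v - Q s v) \<le> s * (norm v * \<omega> (h * norm v))" by linarith
  then show ?thesis using s by (simp add: mult_le_cancel_left_pos)
qed


end




context SC begin

lemma sc_app:
  assumes "X \<in> K" "Y \<in> K" "closed_segment X Y \<subseteq> K" "0 \<le> l" "l \<le> 1"
  shows "l * u X + (1 - l) * u Y - u (l *\<^sub>R X + (1 - l) *\<^sub>R Y) \<le> l * (1 - l) * norm (X - Y) * \<omega> (norm (X - Y))"
  using sc assms unfolding semiconcave_with_def by simp

lemma Dlim:
  assumes h0: "h0 > 0" and seg: "closed_segment x (x + h0 *\<^sub>R v) \<subseteq> K"
  shows "((\<lambda>h. Q h v) \<longlongrightarrow> d v) (at_right 0)"
    and "\<And>h. 0 < h \<Longrightarrow> h \<le> h0 \<Longrightarrow> Q h v - norm v * \<omega> (h * norm v) \<le> d v"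
proof -
  have segh: "closed_segment x (x + h *\<^sub>R v) \<subseteq> K" if "0 \<le> h" "h \<le> h0" for h
    using seg_sub[OF that, of v] seg by blast
  have "\<exists>l. ((\<lambda>h. Q h v) \<longlongrightarrow> l) (at_right 0) \<and> (\<forall>h. 0 < h \<and> h \<le> h0 \<longrightarrow> Q h v - norm v * \<omega> (h * norm v) \<le> l)"
  proof (rule lim_exists_aux[OF h0])
    fix h assume "0 < h" "h \<le> h0"
    then have "x + h *\<^sub>R v \<in> K" using segh[of h] by auto
    then show "Q h v \<le> L * norm v" using Q_bound[of h v] \<open>0 < h\<close> by simp
  next
    show "((\<lambda>h. norm v * \<omega> (h * norm v)) \<longlongrightarrow> 0) (at_right 0)"
      using modulus_scaled_tendsto[OF md, of "norm v"] by simp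
  next
    fix s h assume "0 < s" "s \<le> h" "h \<le> h0"
    then show "Q h v - norm v * \<omega> (h * norm v) \<le> Q s v"
      using Q_mono[OF segh] by simp
  qed
  then obtain l where l: "((\<lambda>h. Q h v) \<longlongrightarrow> l) (at_right 0)"
    "\<forall>h. 0 < h \<and> h \<le> h0 \<longrightarrow> Q h v - norm v * \<omega> (h * norm v) \<le> l" by blast
  have "d v = l" unfolding d_def using l(1) by (intro tendsto_Lim) simp_all
  then show "((\<lambda>h. Q h v) \<longlongrightarrow> d v) (at_right 0)"
    and "\<And>h. 0 < h \<Longrightarrow> h \<le> h0 \<Longrightarrow> Q h v - norm v * \<omega> (h * norm v) \<le> d v"
    using l by auto
qed

lemma Cone_seg:
  assumes "w \<in> Cone"
  shows "\<exists>h0>0. closed_segment x (x + h0 *\<^sub>R w) \<subseteq> K"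
proof -
  have iw: "inner \<nu> w < 0" using assms by (simp add: Cone_def)
  then have w0: "w \<noteq> 0" by auto
  define \<epsilon> where "\<epsilon> = - inner \<nu> w / norm w"
  have e: "\<epsilon> > 0" using iw w0 by (simp add: \<epsilon>_def divide_neg_pos)
  obtain \<rho> where \<rho>: "\<rho> > 0" "convex {z. norm (z - x) < \<rho> \<and> inner \<nu> (z - x) + \<epsilon> * norm (z - x) \<le> 0}"
     "{z. norm (z - x) < \<rho> \<and> inner \<nu> (z - x) + \<epsilon> * norm (z - x) \<le> 0} \<subseteq> K"
    using Gam[OF e] by blast
  define h0 where "h0 = \<rho> / (2 * norm w)"
  have h0: "h0 > 0" using \<rho> w0 by (simp add: h0_def)
  have en: "\<epsilon> * norm w = - inner \<nu> w" using w0 by (simp add: \<epsilon>_def)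
  have n: "norm (x + h0 *\<^sub>R w - x) = h0 * norm w" using h0 by simp
  also have "\<dots> = \<rho> / 2" using w0 by (simp add: h0_def)
  finally have n2: "norm (x + h0 *\<^sub>R w - x) < \<rho>" using \<rho> by simp
  have "inner \<nu> (x + h0 *\<^sub>R w - x) + \<epsilon> * norm (x + h0 *\<^sub>R w - x) = h0 * (inner \<nu> w + \<epsilon> * norm w)"
    unfolding n by (simp add: algebra_simps)
  also have "\<dots> = 0" using en by simp
  finally have "x + h0 *\<^sub>R w \<in> {z. norm (z - x) < \<rho> \<and> inner \<nu> (z - x) + \<epsilon> * norm (z - x) \<le> 0}"
    using n2 by simp
  moreover have "x \<in> {z. norm (z - x) < \<rho> \<and> inner \<nu> (z - x) + \<epsilon> * norm (z - x) \<le> 0}"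
    using \<rho> by simp
  ultimately have "closed_segment x (x + h0 *\<^sub>R w) \<subseteq> K"
    using closed_segment_subset[OF _ _ \<rho>(2)] \<rho>(3) by blast
  then show ?thesis using h0 by blast
qed

lemma Cone_lim: "w \<in> Cone \<Longrightarrow> ((\<lambda>h. Q h w) \<longlongrightarrow> d w) (at_right 0)"
  using Cone_seg Dlim(1) by blast

lemma Cone_ev:
  assumes "w \<in> Cone"
  shows "eventually (\<lambda>h. x + h *\<^sub>R w \<in> K) (at_right 0)"
proof -
  obtain h0 where h0: "h0 > 0" "closed_segment x (x + h0 *\<^sub>R w) \<subseteq> K" using Cone_seg[OF assms] by blast
  have "eventually (\<lambda>h. h \<in> {0<..<h0}) (at_right 0)" using h0 by (intro eventually_at_right_real) auto
  then show ?thesis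
  proof eventually_elim
    case (elim h)
    then have "closed_segment x (x + h *\<^sub>R w) \<subseteq> K" using seg_sub[of h h0 w] h0 by auto
    then show ?case by auto
  qed
qed

lemma d_bound:
  assumes "w \<in> Cone" shows "\<bar>d w\<bar> \<le> L * norm w"
proof -
  have "eventually (\<lambda>h. \<bar>Q h w\<bar> \<le> L * norm w) (at_right 0)"
    using Cone_ev[OF assms] eventually_at_right_real[OF zero_less_one]
    by eventually_elim (auto intro: Q_bound)
  then show ?thesis
    using tendsto_upperbound[OF tendsto_rabs[OF Cone_lim[OF assms]]] by simp
qed

lemma d_lip:
  assumes "w \<in> Cone" "w' \<in> Cone" shows "\<bar>d w - d w'\<bar> \<le> L * norm (w - w')"
proof -
  have "eventually (\<lambda>h. \<bar>Q h w - Q h w'\<bar> \<le> L * norm (w - w')) (at_right 0)"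
    using Cone_ev[OF assms(1)] Cone_ev[OF assms(2)] eventually_at_right_real[OF zero_less_one]
  proof eventually_elim
    case (elim h)
    then have "\<bar>u (x + h *\<^sub>R w) - u (x + h *\<^sub>R w')\<bar> \<le> L * norm (h *\<^sub>R (w - w'))"
      using ulip[of "x + h *\<^sub>R w" "x + h *\<^sub>R w'"] by (simp add: algebra_simps)
    also have "\<dots> = h * (L * norm (w - w'))" using elim by simp
    finally have "\<bar>u (x + h *\<^sub>R w) - u (x + h *\<^sub>R w')\<bar> / h \<le> L * norm (w - w')"
      using elim by (simp add: divide_le_eq mult.commute)
    moreover have "Q h w - Q h w' = (u (x + h *\<^sub>R w) - u (x + h *\<^sub>R w')) / h"
      unfolding Q_def by (simp add: diff_divide_distrib)
    ultimately show ?case using elim by (simp add: abs_divide)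
  qed
  then show ?thesis
    using tendsto_upperbound[OF tendsto_rabs[OF tendsto_diff[OF Cone_lim[OF assms(1)] Cone_lim[OF assms(2)]]]]
    by simp
qed

lemma d_hom2:
  assumes "w \<in> Cone" shows "2 *\<^sub>R w \<in> Cone" "d (2 *\<^sub>R w) = 2 * d w"
proof -
  show c2: "2 *\<^sub>R w \<in> Cone" using assms by (simp add: Cone_def)
  have eq: "Q h (2 *\<^sub>R w) = 2 * Q (h * 2) w" for h
    by (cases "h = 0") (simp_all add: Q_def field_simps)
  have "((\<lambda>h. Q (h * 2) w) \<longlongrightarrow> d w) (at_right 0)"
    using filterlim_compose[OF Cone_lim[OF assms] filterlim_scale_at_right[of 2]] by simp
  then have "((\<lambda>h. Q h (2 *\<^sub>R w)) \<longlongrightarrow> 2 * d w) (at_right 0)"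
    unfolding eq by (intro tendsto_mult_left)
  then show "d (2 *\<^sub>R w) = 2 * d w"
    using tendsto_unique[OF _ Cone_lim[OF c2]] by simp
qed

lemma d_concave:
  assumes w1: "w1 \<in> Cone" and w2: "w2 \<in> Cone" and l: "0 \<le> l" "l \<le> 1"
  shows "l *\<^sub>R w1 + (1 - l) *\<^sub>R w2 \<in> Cone"
    and "l * d w1 + (1 - l) * d w2 \<le> d (l *\<^sub>R w1 + (1 - l) *\<^sub>R w2)"
proof -
  define wl where "wl = l *\<^sub>R w1 + (1 - l) *\<^sub>R w2"
  have i1: "inner \<nu> w1 < 0" and i2: "inner \<nu> w2 < 0" using w1 w2 by (auto simp: Cone_def)
  have "inner \<nu> wl = l * inner \<nu> w1 + (1 - l) * inner \<nu> w2" by (simp add: wl_def inner_add_right)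
  also have "\<dots> < 0"
  proof (cases "l = 0")
    case True then show ?thesis using i2 by simp
  next
    case False then have "l > 0" using l by simp
    then show ?thesis using i1 i2 l by (smt (verit) mult_nonneg_nonpos mult_pos_neg)
  qed
  finally show wlC: "l *\<^sub>R w1 + (1 - l) *\<^sub>R w2 \<in> Cone" by (simp add: Cone_def wl_def)
  have nw1: "w1 \<noteq> 0" and nw2: "w2 \<noteq> 0" using i1 i2 by auto
  define \<epsilon> where "\<epsilon> = min (- inner \<nu> w1 / norm w1) (- inner \<nu> w2 / norm w2)"
  have e: "\<epsilon> > 0" using i1 i2 nw1 nw2 by (simp add: \<epsilon>_def divide_neg_pos)
  obtain \<rho> where \<rho>: "\<rho> > 0" "convex {z. norm (z - x) < \<rho> \<and> inner \<nu> (z - x) + \<epsilon> * norm (z - x) \<le> 0}"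
     "{z. norm (z - x) < \<rho> \<and> inner \<nu> (z - x) + \<epsilon> * norm (z - x) \<le> 0} \<subseteq> K"
    using Gam[OF e] by blast
  define G where "G = {z. norm (z - x) < \<rho> \<and> inner \<nu> (z - x) + \<epsilon> * norm (z - x) \<le> 0}"
  have inG: "x + h *\<^sub>R w \<in> G" if "w = w1 \<or> w = w2" "0 < h" "h * norm w < \<rho>" for h w
  proof -
    have nw: "norm w > 0" using that nw1 nw2 by auto
    have "\<epsilon> \<le> (- inner \<nu> w) / norm w" using that unfolding \<epsilon>_def by auto
    then have "\<epsilon> * norm w \<le> - inner \<nu> w" using nw by (simp only: le_divide_eq)
    then have "h * (inner \<nu> w + \<epsilon> * norm w) \<le> 0" using that by (simp add: mult_nonneg_nonpos)
    then have "h * inner \<nu> w + \<epsilon> * (h * norm w) \<le> 0" by (simp add: algebra_simps)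
    then show ?thesis using that by (simp add: G_def)
  qed
  define M where "M = \<rho> / (1 + norm w1 + norm w2)"
  have M: "M > 0" using \<rho> by (simp add: M_def add_pos_nonneg)
  have ev: "eventually (\<lambda>h. l * Q h w1 + (1 - l) * Q h w2 - Q h wl \<le> norm (w1 - w2) * \<omega> (h * norm (w1 - w2))) (at_right 0)"
    using eventually_at_right_real[OF M]
  proof eventually_elim
    case (elim h)
    then have h: "0 < h" "h < M" by auto
    have "h * norm w1 < \<rho>" "h * norm w2 < \<rho>"
    proof -
      have "h * norm w1 \<le> h * (1 + norm w1 + norm w2)" "h * norm w2 \<le> h * (1 + norm w1 + norm w2)"
        using h by (auto intro!: mult_left_mono)
      moreover have "h * (1 + norm w1 + norm w2) < \<rho>"
      proof -
        have D: "1 + norm w1 + norm w2 > 0" by (simp add: add_pos_nonneg)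
        show ?thesis using h(2) unfolding M_def pos_less_divide_eq[OF D] .
      qed
      ultimately show "h * norm w1 < \<rho>" "h * norm w2 < \<rho>" by linarith+
    qed
    then have X: "x + h *\<^sub>R w1 \<in> G" and Y: "x + h *\<^sub>R w2 \<in> G" using inG h by auto
    have segXY: "closed_segment (x + h *\<^sub>R w1) (x + h *\<^sub>R w2) \<subseteq> K"
      using closed_segment_subset[OF X Y] \<rho> by (auto simp: G_def)
    have XK: "x + h *\<^sub>R w1 \<in> K" and YK: "x + h *\<^sub>R w2 \<in> K" using X Y \<rho>(3) by (auto simp: G_def)
    have "l * u (x + h *\<^sub>R w1) + (1 - l) * u (x + h *\<^sub>R w2) - u (l *\<^sub>R (x + h *\<^sub>R w1) + (1 - l) *\<^sub>R (x + h *\<^sub>R w2))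
      \<le> l * (1 - l) * norm (x + h *\<^sub>R w1 - (x + h *\<^sub>R w2)) * \<omega> (norm (x + h *\<^sub>R w1 - (x + h *\<^sub>R w2)))"
      by (rule sc_app[OF XK YK segXY l])
    moreover have "l *\<^sub>R (x + h *\<^sub>R w1) + (1 - l) *\<^sub>R (x + h *\<^sub>R w2) = x + h *\<^sub>R wl"
      by (simp add: wl_def algebra_simps)
    moreover have "norm (x + h *\<^sub>R w1 - (x + h *\<^sub>R w2)) = h * norm (w1 - w2)"
      using h by (simp add: abs_of_pos flip: scaleR_diff_right)
    ultimately have ineq: "l * u (x + h *\<^sub>R w1) + (1 - l) * u (x + h *\<^sub>R w2) - u (x + h *\<^sub>R wl)
       \<le> l * (1 - l) * (h * norm (w1 - w2)) * \<omega> (h * norm (w1 - w2))" by simp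
    have om: "\<omega> (h * norm (w1 - w2)) \<ge> 0" using h by (intro om0) simp
    have ll: "l * (1 - l) \<le> 1" using l by (smt (verit) mult_le_one)
    have "l * (1 - l) * (h * norm (w1 - w2)) * \<omega> (h * norm (w1 - w2)) \<le> h * (norm (w1 - w2) * \<omega> (h * norm (w1 - w2)))"
    proof -
      have "0 \<le> h * (norm (w1 - w2) * \<omega> (h * norm (w1 - w2)))" using h om by simp
      then have "l * (1 - l) * (h * (norm (w1 - w2) * \<omega> (h * norm (w1 - w2)))) \<le> h * (norm (w1 - w2) * \<omega> (h * norm (w1 - w2)))"
        using ll by (simp add: mult_left_le_one_le l)
      then show ?thesis by (simp add: algebra_simps)
    qed
    with ineq have "l * u (x + h *\<^sub>R w1) + (1 - l) * u (x + h *\<^sub>R w2) - u (x + h *\<^sub>R wl) \<le> h * (norm (w1 - w2) * \<omega> (h * norm (w1 - w2)))"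
      by linarith
    moreover have "h * (l * Q h w1 + (1 - l) * Q h w2 - Q h wl) = l * u (x + h *\<^sub>R w1) + (1 - l) * u (x + h *\<^sub>R w2) - u (x + h *\<^sub>R wl)"
      using h by (simp add: Q_def field_simps)
    ultimately have "h * (l * Q h w1 + (1 - l) * Q h w2 - Q h wl) \<le> h * (norm (w1 - w2) * \<omega> (h * norm (w1 - w2)))"
      by linarith
    then show ?case using h by (simp add: mult_le_cancel_left_pos)
  qed
  have lim1: "((\<lambda>h. l * Q h w1 + (1 - l) * Q h w2 - Q h wl) \<longlongrightarrow> l * d w1 + (1 - l) * d w2 - d wl) (at_right 0)"
    using wlC unfolding wl_def[symmetric]
    by (intro tendsto_intros Cone_lim w1 w2)
  have lim2: "((\<lambda>h. norm (w1 - w2) * \<omega> (h * norm (w1 - w2))) \<longlongrightarrow> 0) (at_right 0)"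
    using modulus_scaled_tendsto[OF md, of "norm (w1 - w2)"] by simp
  have "l * d w1 + (1 - l) * d w2 - d wl \<le> 0"
    using tendsto_le[OF _ lim2 lim1 ev] by simp
  then show "l * d w1 + (1 - l) * d w2 \<le> d (l *\<^sub>R w1 + (1 - l) *\<^sub>R w2)" by (simp add: wl_def)
qed

end




context SC begin

definition F :: "'a \<Rightarrow> real" where "F v = Sup ((\<lambda>w. d w - L * norm (v - w)) ` Cone)"

lemma Cone_ne: "- \<nu> \<in> Cone" using nu1 by (simp add: Cone_def inner_commute flip: power2_norm_eq_inner)

lemma F_bdd: "bdd_above ((\<lambda>w. d w - L * norm (v - w)) ` Cone)"
proof (rule bdd_aboveI2)
  fix w assume w: "w \<in> Cone"
  have "norm w \<le> norm v + norm (v - w)" using norm_triangle_ineq4[of v "v - w"] by simp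
  then have "L * norm w \<le> L * norm v + L * norm (v - w)" using L0 by (simp add: mult_left_mono flip: distrib_left)
  then show "d w - L * norm (v - w) \<le> L * norm v" using d_bound[OF w] by linarith
qed

lemma F_ge: "w \<in> Cone \<Longrightarrow> d w - L * norm (v - w) \<le> F v"
  unfolding F_def by (rule cSUP_upper[OF _ F_bdd])

lemma F_le: "(\<And>w. w \<in> Cone \<Longrightarrow> d w - L * norm (v - w) \<le> M) \<Longrightarrow> F v \<le> M"
  unfolding F_def using Cone_ne by (intro cSUP_least) auto

lemma F1: "w \<in> Cone \<Longrightarrow> F w = d w"
proof (rule antisym)
  assume w: "w \<in> Cone"
  show "F w \<le> d w"
  proof (rule F_le)
    fix w' assume "w' \<in> Cone"
    then show "d w' - L * norm (w - w') \<le> d w" using d_lip[OF w, of w'] by simp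
  qed
  show "d w \<le> F w" using F_ge[OF w, of w] by simp
qed

lemma F2: "F v \<le> F v' + L * norm (v - v')"
proof (rule F_le)
  fix w assume w: "w \<in> Cone"
  have "norm (v' - w) \<le> norm (v - w) + norm (v - v')"
    using norm_triangle_ineq4[of "v - w" "v - v'"] by (simp add: algebra_simps)
  then have "L * norm (v' - w) \<le> L * norm (v - w) + L * norm (v - v')"
    using L0 by (simp add: mult_left_mono flip: distrib_left)
  then show "d w - L * norm (v - w) \<le> F v' + L * norm (v - v')"
    using F_ge[OF w, of v'] by linarith
qed

lemma F0: "F 0 \<ge> 0"
proof (rule field_le_epsilon)
  fix e :: real assume e: "e > 0"
  define k where "k = e / (2 * L + 1)"
  have k: "k > 0" using e L0 by (simp add: k_def)
  have wC: "- (k *\<^sub>R \<nu>) \<in> Cone" using k nu1 by (simp add: Cone_def inner_commute flip: power2_norm_eq_inner)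
  have "\<bar>d (- (k *\<^sub>R \<nu>))\<bar> \<le> L * k" using d_bound[OF wC] k nu1 by simp
  then have "- (2 * L * k) \<le> d (- (k *\<^sub>R \<nu>)) - L * norm (0 - (- (k *\<^sub>R \<nu>)))" using k nu1 by simp
  also have "\<dots> \<le> F 0" by (rule F_ge[OF wC])
  finally have "- (2 * L * k) \<le> F 0" .
  moreover have "2 * L * k \<le> e"
  proof -
    have "2 * L * k = e * (2 * L) / (2 * L + 1)" by (simp add: k_def)
    also have "\<dots> \<le> e" using e L0 by (simp add: divide_le_eq)
    finally show ?thesis .
  qed
  ultimately show "0 \<le> F 0 + e" by linarith
qed

lemma F_2: "2 * F v \<le> F (2 *\<^sub>R v)"
proof -
  have "F v \<le> F (2 *\<^sub>R v) / 2"
  proof (rule F_le)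
    fix w assume w: "w \<in> Cone"
    have "d (2 *\<^sub>R w) - L * norm (2 *\<^sub>R v - 2 *\<^sub>R w) \<le> F (2 *\<^sub>R v)" using F_ge[OF d_hom2(1)[OF w]] .
    moreover have "norm (2 *\<^sub>R v - 2 *\<^sub>R w) = 2 * norm (v - w)"
      by (simp flip: scaleR_diff_right)
    ultimately show "d w - L * norm (v - w) \<le> F (2 *\<^sub>R v) / 2" using d_hom2(2)[OF w] by simp
  qed
  then show ?thesis by simp
qed

lemma F3:
  assumes l: "0 \<le> l" "l \<le> 1"
  shows "l * F v1 + (1 - l) * F v2 \<le> F (l *\<^sub>R v1 + (1 - l) *\<^sub>R v2)"
proof -
  define vl where "vl = l *\<^sub>R v1 + (1 - l) *\<^sub>R v2"
  have key: "l * (d w1 - L * norm (v1 - w1)) + (1 - l) * (d w2 - L * norm (v2 - w2)) \<le> F vl"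
    if w1: "w1 \<in> Cone" and w2: "w2 \<in> Cone" for w1 w2
  proof -
    define wl where "wl = l *\<^sub>R w1 + (1 - l) *\<^sub>R w2"
    have wlC: "wl \<in> Cone" using d_concave(1)[OF w1 w2 l] by (simp add: wl_def)
    have dl: "l * d w1 + (1 - l) * d w2 \<le> d wl" using d_concave(2)[OF w1 w2 l] by (simp add: wl_def)
    have "vl - wl = l *\<^sub>R (v1 - w1) + (1 - l) *\<^sub>R (v2 - w2)" by (simp add: vl_def wl_def algebra_simps)
    then have "norm (vl - wl) \<le> l * norm (v1 - w1) + (1 - l) * norm (v2 - w2)"
      using norm_triangle_ineq[of "l *\<^sub>R (v1 - w1)" "(1 - l) *\<^sub>R (v2 - w2)"] l by simp
    then have "L * norm (vl - wl) \<le> l * (L * norm (v1 - w1)) + (1 - l) * (L * norm (v2 - w2))"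
      using L0 mult_left_mono by (fastforce simp: algebra_simps)
    then have "l * (d w1 - L * norm (v1 - w1)) + (1 - l) * (d w2 - L * norm (v2 - w2)) \<le> d wl - L * norm (vl - wl)"
      using dl by (simp add: algebra_simps)
    also have "\<dots> \<le> F vl" by (rule F_ge[OF wlC])
    finally show ?thesis .
  qed
  show ?thesis
  proof (cases "l = 0 \<or> l = 1")
    case True then show ?thesis by (auto simp: vl_def)
  next
    case False
    then have l0: "0 < l" "0 < 1 - l" using l by auto
    have "F v2 \<le> (F vl - l * F v1) / (1 - l)"
    proof (rule F_le)
      fix w2 assume w2: "w2 \<in> Cone"
      have "F v1 \<le> (F vl - (1 - l) * (d w2 - L * norm (v2 - w2))) / l"
      proof (rule F_le)
        fix w1 assume w1: "w1 \<in> Cone"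
        show "d w1 - L * norm (v1 - w1) \<le> (F vl - (1 - l) * (d w2 - L * norm (v2 - w2))) / l"
          using key[OF w1 w2] l0 by (simp add: le_divide_eq algebra_simps)
      qed
      then show "d w2 - L * norm (v2 - w2) \<le> (F vl - l * F v1) / (1 - l)"
        using l0 by (simp add: le_divide_eq algebra_simps)
    qed
    then show ?thesis using l0 by (simp add: le_divide_eq algebra_simps vl_def)
  qed
qed

lemma supergrad: "\<exists>p. \<forall>w. F w \<le> F t + inner p (w - t)"
proof -
  define A where "A = {z :: 'a \<times> real. snd z < F (fst z)}"
  define T where "T = {(t, F t)}"
  have cA: "convex A" unfolding convex_def A_def
  proof (intro ballI allI impI, clarsimp)
    fix a1 t1 a2 t2 and a b :: real
    assume h: "t1 < F a1" "t2 < F a2" "0 \<le> a" "0 \<le> b" "a + b = 1"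
    have "a * t1 + b * t2 < a * F a1 + b * F a2"
    proof (cases "a = 0")
      case True then show ?thesis using h by simp
    next
      case False then have "a > 0" using h by simp
      then have "a * t1 < a * F a1" using h by simp
      moreover have "b * t2 \<le> b * F a2" using h by (intro mult_left_mono) auto
      ultimately show ?thesis by simp
    qed
    also have "\<dots> \<le> F (a *\<^sub>R a1 + b *\<^sub>R a2)"
      using F3[of a a1 a2] h by (simp add: eq_diff_eq[symmetric])
    finally show "a * t1 + b * t2 < F (a *\<^sub>R a1 + b *\<^sub>R a2)" .
  qed
  have cT: "convex T" by (simp add: T_def)
  have "(t, F t - 1) \<in> A" by (simp add: A_def)
  then have neA: "A \<noteq> {}" by blast
  have disj: "A \<inter> T = {}" by (auto simp: A_def T_def)
  obtain c b where cb: "c \<noteq> 0" "\<forall>z\<in>A. inner c z \<le> b" "\<forall>z\<in>T. inner c z \<ge> b"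
    using separating_hyperplane_sets[OF cA cT neA _ disj] by (auto simp: T_def)
  obtain q s where c: "c = (q, s)" by (cases c)
  have main: "inner q w + s * r \<le> inner q t + s * F t" if "r < F w" for w r
  proof -
    have "inner c (w, r) \<le> b" using cb(2) that by (auto simp: A_def)
    moreover have "inner c (t, F t) \<ge> b" using cb(3) by (simp add: T_def)
    ultimately show ?thesis by (simp add: c)
  qed
  have s: "s > 0"
  proof (rule ccontr)
    assume "\<not> s > 0"
    then consider "s < 0" | "s = 0" by linarith
    then show False
    proof cases
      case 1
      have "inner q t + s * (F t - 1) \<le> inner q t + s * F t" using main[of "F t - 1" t] by simp
      then show False using 1 by (simp add: algebra_simps)
    next
      case 2
      then have "q \<noteq> 0" using cb(1) c by (auto simp: zero_prod_def)
      have "inner q (t + q) \<le> inner q t" using main[of "F (t + q) - 1" "t + q"] 2 by simp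
      then have "inner q q \<le> 0" by (simp add: inner_add_right)
      then show False using \<open>q \<noteq> 0\<close> inner_gt_zero_iff[of q] by linarith
    qed
  qed
  define p where "p = - (1 / s) *\<^sub>R q"
  have "F w \<le> F t + inner p (w - t)" for w
  proof (rule field_le_epsilon)
    fix e :: real assume e: "e > 0"
    have "inner q w + s * (F w - e) \<le> inner q t + s * F t" using main[of "F w - e" w] e by simp
    then have "s * F w \<le> s * F t - inner q (w - t) + s * e" by (simp add: algebra_simps inner_diff_right)
    then have "F w \<le> F t - inner q (w - t) / s + e" using s by (simp add: field_simps)
    then show "F w \<le> F t + inner p (w - t) + e" by (simp add: p_def)
  qed
  then show ?thesis by blast
qed

lemma pstar: "\<exists>p. inner p t = F t \<and> (\<forall>w. F w \<le> inner p w)"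
proof -
  obtain p where p: "\<And>w. F w \<le> F t + inner p (w - t)" using supergrad[of t] by blast
  have a: "inner p t \<le> F t" using p[of 0] F0 by simp
  have "F (2 *\<^sub>R t) \<le> F t + inner p t" using p[of "2 *\<^sub>R t"] by (simp add: algebra_simps)
  then have b: "F t \<le> inner p t" using F_2[of t] by simp
  have "F w \<le> inner p w" for w using p[of w] b by (simp add: inner_diff_right)
  then show ?thesis using a b by (intro exI[of _ p]) auto
qed

end




lemma Liminf_ge_eps:
  assumes "\<And>e. e > 0 \<Longrightarrow> eventually (\<lambda>z. c - e < f z) F"
  shows "ereal c \<le> Liminf F (\<lambda>z. ereal (f z))"
  unfolding le_Liminf_iff
proof (intro allI impI)
  fix y assume y: "y < ereal c"
  show "eventually (\<lambda>z. y < ereal (f z)) F"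
  proof (cases y)
    case (real r)
    then have "r < c" using y by simp
    then have "eventually (\<lambda>z. c - (c - r) < f z) F" using assms[of "c - r"] by simp
    then show ?thesis by eventually_elim (simp add: real)
  next
    case PInf then show ?thesis using y by simp
  next
    case MInf then show ?thesis by simp
  qed
qed

lemma Limsup_le_eps:
  assumes "\<And>e. e > 0 \<Longrightarrow> eventually (\<lambda>z. f z < c + e) F"
  shows "Limsup F (\<lambda>z. ereal (f z)) \<le> ereal c"
  unfolding Limsup_le_iff
proof (intro allI impI)
  fix y assume y: "y > ereal c"
  show "eventually (\<lambda>z. y > ereal (f z)) F"
  proof (cases y)
    case (real r)
    then have "r > c" using y by simp
    then have "eventually (\<lambda>z. f z < c + (r - c)) F" using assms[of "r - c"] by simp
    then show ?thesis by eventually_elim (simp add: real)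
  next
    case PInf then show ?thesis by simp
  next
    case MInf then show ?thesis using y by simp
  qed
qed

context SC begin

lemma p_super:
  assumes pd: "\<And>w. w \<in> Cone \<Longrightarrow> d w \<le> inner p w"
  shows "p \<in> superdiff K u x"
proof -
  have "Limsup (at x within K) (\<lambda>y. ereal ((u y - u x - inner p (y - x)) / norm (y - x))) \<le> ereal 0"
  proof (rule Limsup_le_eps)
    fix e :: real assume e: "e > 0"
    define \<kappa> where "\<kappa> = min 1 (e / (4 * (norm p + L + 1)))"
    have pos: "0 < 4 * (norm p + L + 1)" using L0 by (simp add: add_nonneg_pos)
    have k0: "\<kappa> > 0" "\<kappa> \<le> 1" using e pos by (auto simp: \<kappa>_def)
    have kb: "\<kappa> * (norm p + L) \<le> e / 4"
    proof -
      have "\<kappa> \<le> e / (4 * (norm p + L + 1))" by (simp add: \<kappa>_def)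
      then have "\<kappa> * (4 * (norm p + L + 1)) \<le> e" using pos by (simp only: le_divide_eq)
      then have "\<kappa> * (norm p + L + 1) \<le> e / 4" by (simp add: algebra_simps)
      moreover have "\<kappa> * (norm p + L) \<le> \<kappa> * (norm p + L + 1)" using k0 by simp
      ultimately show ?thesis by linarith
    qed
    define \<epsilon> where "\<epsilon> = \<kappa> / 4"
    have e0: "\<epsilon> > 0" using k0 by (simp add: \<epsilon>_def)
    obtain \<rho> where \<rho>: "\<rho> > 0" "\<forall>y\<in>K. norm (y - x) < \<rho> \<longrightarrow> inner \<nu> (y - x) \<le> \<epsilon> * norm (y - x)"
      "convex {z. norm (z - x) < \<rho> \<and> inner \<nu> (z - x) + \<epsilon> * norm (z - x) \<le> 0}"
      "{z. norm (z - x) < \<rho> \<and> inner \<nu> (z - x) + \<epsilon> * norm (z - x) \<le> 0} \<subseteq> K"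
      using Gam[OF e0] by blast
    define G where "G = {z. norm (z - x) < \<rho> \<and> inner \<nu> (z - x) + \<epsilon> * norm (z - x) \<le> 0}"
    have "eventually (\<lambda>s. dist (\<omega> s) 0 < e / 4) (at_right 0)"
      using md e unfolding modulus_def by (intro tendstoD) auto
    then obtain s1 where s1': "s1 > 0" "\<forall>s>0. s < s1 \<longrightarrow> dist (\<omega> s) 0 < e / 4"
      unfolding eventually_at_right_field by blast
    have s1: "s1 > 0" "\<And>s. 0 < s \<Longrightarrow> s < s1 \<Longrightarrow> \<omega> s < e / 4"
      using s1' by (auto simp: dist_real_def abs_less_iff)
    define \<delta> where "\<delta> = min (\<rho> / 2) (s1 / 2)"
    have d0: "\<delta> > 0" using \<rho> s1 by (simp add: \<delta>_def)
    show "eventually (\<lambda>y. (u y - u x - inner p (y - x)) / norm (y - x) < 0 + e) (at x within K)"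
      unfolding eventually_at
    proof (intro exI[of _ \<delta>] conjI d0 ballI impI)
      fix y assume yK: "y \<in> K" and yd: "y \<noteq> x \<and> dist y x < \<delta>"
      define h where "h = norm (y - x)"
      have h0: "h > 0" using yd by (simp add: h_def)
      have hd: "h < \<delta>" using yd by (simp add: h_def dist_norm)
      define w where "w = (1 / h) *\<^sub>R (y - x) - \<kappa> *\<^sub>R \<nu>"
      have hw: "h *\<^sub>R w = (y - x) - (h * \<kappa>) *\<^sub>R \<nu>" using h0 by (simp add: w_def algebra_simps)
      have hr: "h < \<rho>" using hd h0 by (simp add: \<delta>_def)
      have iny: "inner \<nu> (y - x) \<le> \<epsilon> * h" using \<rho>(2) yK hr by (simp add: h_def)
      have iw: "inner \<nu> w = inner \<nu> (y - x) / h - \<kappa>" using nu1 by (simp add: w_def inner_diff_right flip: power2_norm_eq_inner)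
      have iw2: "inner \<nu> w \<le> \<epsilon> - \<kappa>" using iny h0 by (simp add: iw divide_le_eq mult.commute)
      have wC: "w \<in> Cone" using iw2 k0 by (simp add: Cone_def \<epsilon>_def)
      have nw: "norm w \<le> 1 + \<kappa>"
      proof -
        have "norm w \<le> norm ((1 / h) *\<^sub>R (y - x)) + norm (\<kappa> *\<^sub>R \<nu>)" unfolding w_def by (rule norm_triangle_ineq4)
        also have "\<dots> = 1 + \<kappa>" using h0 k0 nu1 by (simp add: h_def)
        finally show ?thesis .
      qed
      have nw2: "norm w \<le> 2" using nw k0 by simp
      have nwp: "norm w > 0" using wC by (auto simp: Cone_def)
      define z where "z = x + h *\<^sub>R w"
      have zx: "z - x = h *\<^sub>R w" by (simp add: z_def)
      have nz: "norm (z - x) = h * norm w" using h0 by (simp add: zx)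
      have nz2: "norm (z - x) < \<rho>"
      proof -
        have "h * norm w \<le> h * 2" using h0 nw2 by simp
        moreover have "h * 2 < \<rho>" using hd by (simp add: \<delta>_def)
        ultimately show ?thesis using nz by linarith
      qed
      have "inner \<nu> (z - x) + \<epsilon> * norm (z - x) = h * (inner \<nu> w + \<epsilon> * norm w)"
        unfolding nz by (simp add: zx algebra_simps)
      also have "\<dots> \<le> 0"
      proof -
        have "\<epsilon> * norm w \<le> \<epsilon> * 2" using e0 nw2 by simp
        then have "inner \<nu> w + \<epsilon> * norm w \<le> 0" using iw2 k0 unfolding \<epsilon>_def by linarith
        then show ?thesis using h0 by (simp add: mult_nonneg_nonpos)
      qed
      finally have zG: "z \<in> G" using nz2 by (simp add: G_def)
      have xG: "x \<in> G" using \<rho> by (simp add: G_def)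
      have seg: "closed_segment x (x + h *\<^sub>R w) \<subseteq> K"
        using closed_segment_subset[OF xG zG] \<rho>(3,4) by (auto simp: G_def z_def)
      have zK: "z \<in> K" using seg by (auto simp: z_def)
      have Qd: "Q h w - norm w * \<omega> (h * norm w) \<le> d w" using Dlim(2)[OF h0 seg h0] by simp
      have om: "\<omega> (h * norm w) < e / 4"
      proof (rule s1(2))
        show "0 < h * norm w" using h0 nwp by simp
        have "h * norm w \<le> h * 2" using h0 nw2 by simp
        moreover have "h * 2 < s1" using hd by (simp add: \<delta>_def)
        ultimately show "h * norm w < s1" by linarith
      qed
      have omt: "norm w * \<omega> (h * norm w) \<le> e / 2"
      proof -
        have "norm w * \<omega> (h * norm w) \<le> 2 * (e / 4)"
          using om nw2 om0[of "h * norm w"] h0 by (intro mult_mono) auto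
        then show ?thesis by simp
      qed
      have Qb: "Q h w \<le> inner p w + e / 2" using Qd omt pd[OF wC] by linarith
      have "u y - u z \<le> L * norm (y - z)" using ulip[OF yK zK] by simp
      also have "norm (y - z) = h * \<kappa>" using h0 k0 nu1 by (simp add: z_def hw)
      finally have uyz: "u y - u z \<le> L * (h * \<kappa>)" .
      have "u z - u x = h * Q h w" using h0 by (simp add: Q_def z_def)
      also have "\<dots> \<le> h * (inner p w + e / 2)" using Qb h0 by simp
      finally have a1: "u z - u x \<le> h * inner p w + h * (e / 2)" by (simp add: algebra_simps)
      have a2: "h * inner p w = inner p (y - x) - h * \<kappa> * inner p \<nu>"
      proof -
        have "h * inner p w = inner p (h *\<^sub>R w)" by simp
        also have "\<dots> = inner p (y - x) - h * \<kappa> * inner p \<nu>" unfolding hw by (simp add: inner_diff_right)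
        finally show ?thesis .
      qed
      have uzx: "u z - u x \<le> inner p (y - x) - h * \<kappa> * inner p \<nu> + h * (e / 2)"
        using a1 a2 by linarith
      have pn: "- inner p \<nu> \<le> norm p" using norm_cauchy_schwarz[of p "- \<nu>"] nu1 by simp
      have "h * \<kappa> * (- inner p \<nu>) \<le> h * \<kappa> * norm p" using pn h0 k0 by (intro mult_left_mono) auto
      then have "- (h * \<kappa> * inner p \<nu>) \<le> h * \<kappa> * norm p" by simp
      with uyz uzx have "u y - u x - inner p (y - x) \<le> L * (h * \<kappa>) + h * \<kappa> * norm p + h * (e / 2)"
        by linarith
      also have "\<dots> = h * (\<kappa> * (norm p + L) + e / 2)" by (simp add: algebra_simps)
      also have "\<dots> \<le> h * (e / 4 + e / 2)" using kb h0 by simp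
      also have "\<dots> < h * e" using h0 e by simp
      finally have "u y - u x - inner p (y - x) < h * e" .
      then have "(u y - u x - inner p (y - x)) / h < e" using h0 by (simp add: divide_less_eq mult.commute)
      then show "(u y - u x - inner p (y - x)) / norm (y - x) < 0 + e" by (simp add: h_def)
    qed
  qed
  then show ?thesis by (simp add: superdiff_def zero_ereal_def)
qed

end




context SC begin

lemma w0_Cone:
  assumes "inner \<nu> \<theta> \<le> 0" "k > 0"
  shows "\<theta> - k *\<^sub>R \<nu> \<in> Cone"
  using assms nu1 by (simp add: Cone_def inner_diff_right flip: power2_norm_eq_inner)

lemma dini_nonbot:
  assumes th: "inner \<nu> \<theta> \<le> 0"
  shows "dini_filter K x \<theta> \<noteq> bot"
proof
  assume "dini_filter K x \<theta> = bot"
  then have "eventually (\<lambda>_. False) (dini_filter K x \<theta>)" by simp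
  then have "eventually (\<lambda>z. z \<in> {(h, \<theta>'). x + h *\<^sub>R \<theta>' \<in> K} \<longrightarrow> False) (at_right 0 \<times>\<^sub>F nhds \<theta>)"
    unfolding dini_filter_def eventually_inf_principal .
  then obtain Pf Pg where P: "eventually Pf (at_right 0)" "eventually Pg (nhds \<theta>)"
    "\<And>h t. Pf h \<Longrightarrow> Pg t \<Longrightarrow> x + h *\<^sub>R t \<notin> K"
    unfolding eventually_prod_filter by auto
  obtain r where r: "r > 0" "\<And>t. dist t \<theta> < r \<Longrightarrow> Pg t"
    using P(2) unfolding eventually_nhds_metric by blast
  define w where "w = \<theta> - (r / 2) *\<^sub>R \<nu>"
  have wC: "w \<in> Cone" unfolding w_def using r th by (intro w0_Cone) auto
  have "Pg w" using r nu1 by (intro r(2)) (simp add: w_def dist_norm)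
  have "eventually (\<lambda>h. Pf h \<and> x + h *\<^sub>R w \<in> K) (at_right 0)"
    using P(1) Cone_ev[OF wC] by (rule eventually_conj)
  then obtain h where "Pf h" "x + h *\<^sub>R w \<in> K"
    using eventually_happens'[OF trivial_limit_at_right_real] by blast
  then show False using P(3) \<open>Pg w\<close> by blast
qed

lemma lower:
  assumes th: "inner \<nu> \<theta> \<le> 0"
  shows "ereal (F \<theta>) \<le> dini_lower K u x \<theta>"
proof -
  have "ereal (F \<theta>) \<le> Liminf (dini_filter K x \<theta>) (\<lambda>z. ereal (Q (fst z) (snd z)))"
  proof (rule Liminf_ge_eps)
    fix e :: real assume e: "e > 0"
    define k where "k = e / (4 * (L + 1))"
    have pos: "0 < 4 * (L + 1)" using L0 by simp
    have k: "k > 0" using e pos by (simp add: k_def)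
    have kL: "3 * (L * k) \<le> 3 * e / 4"
    proof -
      have "k * (4 * (L + 1)) = e" using pos by (simp add: k_def)
      then have "L * k \<le> e / 4" using k by (simp add: algebra_simps)
      then show ?thesis by simp
    qed
    define w where "w = \<theta> - k *\<^sub>R \<nu>"
    have wC: "w \<in> Cone" unfolding w_def using k th by (intro w0_Cone) auto
    have Fw: "F \<theta> \<le> d w + L * k"
      using F2[of \<theta> w] F1[OF wC] k nu1 by (simp add: w_def)
    have ev1: "eventually (\<lambda>h. dist (Q h w) (d w) < e / 4) (at_right 0)"
      using Cone_lim[OF wC] e by (intro tendstoD) auto
    define Pf where "Pf = (\<lambda>h. 0 < h \<and> dist (Q h w) (d w) < e / 4 \<and> x + h *\<^sub>R w \<in> K)"
    have evf: "eventually Pf (at_right 0)"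
      unfolding Pf_def using eventually_at_right_real[OF zero_less_one] ev1 Cone_ev[OF wC]
      by eventually_elim auto
    have evg: "eventually (\<lambda>t. dist t \<theta> < k) (nhds \<theta>)"
      using k unfolding eventually_nhds_metric by blast
    have "eventually (\<lambda>z. z \<in> {(h, \<theta>'). x + h *\<^sub>R \<theta>' \<in> K} \<longrightarrow> F \<theta> - e < Q (fst z) (snd z)) (at_right 0 \<times>\<^sub>F nhds \<theta>)"
      unfolding eventually_prod_filter
    proof (intro exI conjI allI impI)
      show "eventually Pf (at_right 0)" by (rule evf)
      show "eventually (\<lambda>t. dist t \<theta> < k) (nhds \<theta>)" by (rule evg)
    next
      fix h t assume Pf: "Pf h" and tk: "dist t \<theta> < k" and tK: "(h, t) \<in> {(h, \<theta>'). x + h *\<^sub>R \<theta>' \<in> K}"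
      have h0: "h > 0" and Qw: "dist (Q h w) (d w) < e / 4" and wK: "x + h *\<^sub>R w \<in> K"
        using Pf by (auto simp: Pf_def)
      have tK': "x + h *\<^sub>R t \<in> K" using tK by simp
      have "\<bar>u (x + h *\<^sub>R t) - u (x + h *\<^sub>R w)\<bar> \<le> L * norm (h *\<^sub>R (t - w))"
        using ulip[OF tK' wK] by (simp add: algebra_simps)
      also have "\<dots> = h * (L * norm (t - w))" using h0 by simp
      finally have ud: "\<bar>u (x + h *\<^sub>R t) - u (x + h *\<^sub>R w)\<bar> \<le> h * (L * norm (t - w))" .
      have "Q h t - Q h w = (u (x + h *\<^sub>R t) - u (x + h *\<^sub>R w)) / h"
        unfolding Q_def by (simp add: diff_divide_distrib)
      then have "\<bar>Q h t - Q h w\<bar> \<le> L * norm (t - w)"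
        using ud h0 by (simp add: abs_divide divide_le_eq mult.commute)
      moreover have "norm (t - w) \<le> 2 * k"
      proof -
        have "norm (t - w) \<le> norm (t - \<theta>) + norm (k *\<^sub>R \<nu>)"
          using norm_triangle_ineq[of "t - \<theta>" "k *\<^sub>R \<nu>"] by (simp add: w_def algebra_simps)
        then show ?thesis using tk k nu1 by (simp add: dist_norm)
      qed
      moreover have "L * norm (t - w) \<le> L * (2 * k)" using mult_left_mono[OF \<open>norm (t - w) \<le> 2 * k\<close> L0] .
      ultimately have "\<bar>Q h t - Q h w\<bar> \<le> 2 * (L * k)" by simp
      then show "F \<theta> - e < Q (fst (h, t)) (snd (h, t))"
      proof -
        have "\<bar>Q h w - d w\<bar> < e / 4" using Qw by (simp only: dist_real_def)
        then have "d w - e / 4 < Q h w" by linarith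
        moreover have "Q h w - 2 * (L * k) \<le> Q h t" using \<open>\<bar>Q h t - Q h w\<bar> \<le> 2 * (L * k)\<close> by (simp add: abs_le_iff)
        ultimately show ?thesis using Fw kL by simp
      qed
    qed
    then show "eventually (\<lambda>z. F \<theta> - e < Q (fst z) (snd z)) (dini_filter K x \<theta>)"
      unfolding dini_filter_def eventually_inf_principal .
  qed
  also have "(\<lambda>z. ereal (Q (fst z) (snd z))) = (\<lambda>(h, \<theta>'). ereal ((u (x + h *\<^sub>R \<theta>') - u x) / h))"
    by (auto simp: Q_def)
  finally show ?thesis by (simp add: dini_lower_def)
qed

end




context SC begin

lemma upper:
  assumes q: "q \<in> superdiff K u x"
  shows "dini_upper K u x \<theta> \<le> ereal (inner q \<theta>)"
proof -
  have "Limsup (dini_filter K x \<theta>) (\<lambda>z. ereal (Q (fst z) (snd z))) \<le> ereal (inner q \<theta>)"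
  proof (rule Limsup_le_eps)
    fix e :: real assume e: "e > 0"
    define \<eta> where "\<eta> = e / (2 * (norm \<theta> + 1))"
    have pos: "0 < 2 * (norm \<theta> + 1)" by (simp add: add_nonneg_pos)
    have eta: "\<eta> > 0" using e pos by (simp add: \<eta>_def)
    have etab: "\<eta> * (norm \<theta> + 1) = e / 2"
    proof -
      have "norm \<theta> + 1 > 0" by (simp add: add_nonneg_pos)
      then show ?thesis by (simp add: \<eta>_def field_simps)
    qed
    have "Limsup (at x within K) (\<lambda>y. ereal ((u y - u x - inner q (y - x)) / norm (y - x))) < ereal \<eta>"
      using q eta by (simp add: superdiff_def) (meson ereal_less(2) le_less_trans)
    then have "eventually (\<lambda>y. ereal ((u y - u x - inner q (y - x)) / norm (y - x)) < ereal \<eta>) (at x within K)"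
      by (rule Limsup_lessD)
    then obtain \<delta> where \<delta>: "\<delta> > 0" "\<And>y. y \<in> K \<Longrightarrow> y \<noteq> x \<Longrightarrow> dist y x < \<delta> \<Longrightarrow> (u y - u x - inner q (y - x)) / norm (y - x) < \<eta>"
      unfolding eventually_at by auto
    define r where "r = min 1 (e / (2 * (norm q + 1)))"
    have posq: "0 < 2 * (norm q + 1)" by (simp add: add_nonneg_pos)
    have r: "r > 0" "r \<le> 1" using e posq by (auto simp: r_def)
    have rq: "norm q * r \<le> e / 2"
    proof -
      have "r \<le> e / (2 * (norm q + 1))" by (simp add: r_def)
      then have "r * (2 * (norm q + 1)) \<le> e" using posq by (simp only: le_divide_eq)
      then show ?thesis using r by (simp add: algebra_simps)
    qed
    define Pf where "Pf = (\<lambda>h::real. 0 < h \<and> h < \<delta> / (norm \<theta> + 1))"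
    have evf: "eventually Pf (at_right 0)"
      unfolding Pf_def using \<delta> by (intro eventually_at_right_real[of 0 "\<delta> / (norm \<theta> + 1)", simplified]) (simp add: add_nonneg_pos)
    have evg: "eventually (\<lambda>t. dist t \<theta> < r) (nhds \<theta>)"
      using r unfolding eventually_nhds_metric by blast
    have "eventually (\<lambda>z. z \<in> {(h, \<theta>'). x + h *\<^sub>R \<theta>' \<in> K} \<longrightarrow> Q (fst z) (snd z) < inner q \<theta> + e) (at_right 0 \<times>\<^sub>F nhds \<theta>)"
      unfolding eventually_prod_filter
    proof (intro exI conjI allI impI)
      show "eventually Pf (at_right 0)" by (rule evf)
      show "eventually (\<lambda>t. dist t \<theta> < r) (nhds \<theta>)" by (rule evg)
    next
      fix h t assume Pf: "Pf h" and tr: "dist t \<theta> < r" and tK: "(h, t) \<in> {(h, \<theta>'). x + h *\<^sub>R \<theta>' \<in> K}"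
      have h0: "h > 0" and hd: "h * (norm \<theta> + 1) < \<delta>"
        using Pf by (auto simp: Pf_def less_divide_eq add_nonneg_pos)
      have yK: "x + h *\<^sub>R t \<in> K" using tK by simp
      have tn: "norm t \<le> norm \<theta> + 1"
        using tr r norm_triangle_ineq2[of t \<theta>] by (simp add: dist_norm)
      have qt: "inner q t \<le> inner q \<theta> + e / 2"
      proof -
        have "inner q (t - \<theta>) \<le> norm q * norm (t - \<theta>)" by (rule norm_cauchy_schwarz)
        also have "\<dots> \<le> norm q * r" using tr by (intro mult_left_mono) (auto simp: dist_norm)
        finally show ?thesis using rq by (simp add: inner_diff_right)
      qed
      show "Q (fst (h, t)) (snd (h, t)) < inner q \<theta> + e"
      proof (cases "t = 0")
        case True
        then have "Q h t = 0" by (simp add: Q_def)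
        moreover have "0 \<le> inner q \<theta> + e / 2" using qt True by simp
        ultimately show ?thesis using e by simp
      next
        case False
        have ny: "norm (x + h *\<^sub>R t - x) = h * norm t" using h0 by simp
        have nyp: "h * norm t > 0" using h0 False by simp
        have "x + h *\<^sub>R t \<noteq> x" using nyp ny by auto
        moreover have "dist (x + h *\<^sub>R t) x < \<delta>"
        proof -
          have "h * norm t \<le> h * (norm \<theta> + 1)" using tn h0 by simp
          then show ?thesis using hd ny unfolding dist_norm by linarith
        qed
        ultimately have "(u (x + h *\<^sub>R t) - u x - inner q (x + h *\<^sub>R t - x)) / norm (x + h *\<^sub>R t - x) < \<eta>"
          using \<delta>(2) yK by blast
        then have "u (x + h *\<^sub>R t) - u x - h * inner q t < \<eta> * (h * norm t)"
          unfolding ny using nyp by (simp add: divide_less_eq)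
        moreover have "h * Q h t = u (x + h *\<^sub>R t) - u x" using h0 by (simp add: Q_def)
        ultimately have "h * Q h t < h * (inner q t + \<eta> * norm t)"
          by (simp add: algebra_simps)
        then have "Q h t < inner q t + \<eta> * norm t" using h0 by simp
        moreover have "\<eta> * norm t \<le> e / 2" using etab tn eta by (metis mult_left_mono less_imp_le)
        ultimately show ?thesis using qt by simp
      qed
    qed
    then show "eventually (\<lambda>z. Q (fst z) (snd z) < inner q \<theta> + e) (dini_filter K x \<theta>)"
      unfolding dini_filter_def eventually_inf_principal .
  qed
  also have "(\<lambda>z. ereal (Q (fst z) (snd z))) = (\<lambda>(h, \<theta>'). ereal ((u (x + h *\<^sub>R \<theta>') - u x) / h))"
    by (auto simp: Q_def)
  finally show ?thesis by (simp add: dini_upper_def)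
qed

theorem main:
  assumes th: "inner \<nu> \<theta> \<le> 0"
  shows "(\<exists>p\<in>superdiff K u x. \<forall>q\<in>superdiff K u x. inner p \<theta> \<le> inner q \<theta>)
    \<and> dini_upper K u x \<theta> = ereal (INF p\<in>superdiff K u x. inner p \<theta>)
    \<and> dini_lower K u x \<theta> = ereal (INF p\<in>superdiff K u x. inner p \<theta>)"
proof -
  obtain p where p: "inner p \<theta> = F \<theta>" "\<And>w. F w \<le> inner p w" using pstar[of \<theta>] by blast
  have pS: "p \<in> superdiff K u x"
    by (rule p_super) (use p(2) F1 in metis)
  have lo: "ereal (inner p \<theta>) \<le> dini_lower K u x \<theta>" using lower[OF th] p(1) by simp
  have lu: "dini_lower K u x \<theta> \<le> dini_upper K u x \<theta>"
    unfolding dini_lower_def dini_upper_def by (rule Liminf_le_Limsup[OF dini_nonbot[OF th]])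
  have up: "\<And>q. q \<in> superdiff K u x \<Longrightarrow> dini_upper K u x \<theta> \<le> ereal (inner q \<theta>)" by (rule upper)
  have minp: "\<forall>q\<in>superdiff K u x. inner p \<theta> \<le> inner q \<theta>"
    using lo lu up by (meson ereal_less_eq(3) order_trans)
  have inf: "(INF p\<in>superdiff K u x. inner p \<theta>) = inner p \<theta>"
    using pS minp by (intro cInf_eq_minimum) auto
  have "dini_upper K u x \<theta> = ereal (inner p \<theta>)" using lo lu up[OF pS] by simp
  moreover have "dini_lower K u x \<theta> = ereal (inner p \<theta>)" using lo lu up[OF pS] by simp
  ultimately show ?thesis using pS minp inf by auto
qed

end




lemma geo_boundary:
  fixes \<Omega> :: "'a::euclidean_space set"
  assumes op: "open \<Omega>" and xf: "x \<in> frontier \<Omega>" and ldf: "local_defining_fun \<Omega> x r \<psi> g"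
    and nu: "\<nu> = g x /\<^sub>R norm (g x)"
  shows "norm \<nu> = 1"
    and "\<And>\<epsilon>. \<epsilon> > 0 \<Longrightarrow> \<exists>\<rho>>0. (\<forall>y\<in>closure \<Omega>. norm (y - x) < \<rho> \<longrightarrow> inner \<nu> (y - x) \<le> \<epsilon> * norm (y - x))
       \<and> (\<forall>z. norm (z - x) < \<rho> \<and> inner \<nu> (z - x) + \<epsilon> * norm (z - x) \<le> 0 \<longrightarrow> z \<in> closure \<Omega>)"
proof -
  have r: "r > 0" and C2: "C2_on (ball x r) \<psi> g" and gnz: "\<And>y. y \<in> ball x r \<Longrightarrow> g y \<noteq> 0"
    and OmB: "\<Omega> \<inter> ball x r = {y \<in> ball x r. \<psi> y < 0}"
    using ldf by (auto simp: local_defining_fun_def)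
  obtain Hs where dpsi: "\<And>y. y \<in> ball x r \<Longrightarrow> (\<psi> has_derivative (\<lambda>v. inner (g y) v)) (at y)"
    and dg: "\<And>y. y \<in> ball x r \<Longrightarrow> (g has_derivative blinfun_apply (Hs y)) (at y)"
    using C2 unfolding C2_on_def by blast
  define a where "a = g x"
  define \<alpha> where "\<alpha> = norm a"
  have xb: "x \<in> ball x r" using r by simp
  have al: "\<alpha> > 0" using gnz[OF xb] by (simp add: \<alpha>_def a_def)
  have nuin: "inner \<nu> v = inner a v / \<alpha>" for v by (simp add: nu a_def \<alpha>_def divide_inverse_commute)
  show "norm \<nu> = 1" using al by (simp add: nu a_def[symmetric] \<alpha>_def[symmetric])
  have xcl: "x \<in> closure \<Omega>" and xnO: "x \<notin> \<Omega>"
    using xf op by (auto simp: frontier_def interior_open)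
  have cpsi: "continuous (at y) \<psi>" if "y \<in> ball x r" for y
    using has_derivative_continuous[OF dpsi[OF that]] .
  have psile: "\<psi> y \<le> 0" if yc: "y \<in> closure \<Omega>" and yb: "y \<in> ball x r" for y
  proof (rule ccontr)
    assume "\<not> \<psi> y \<le> 0"
    then have pos: "\<psi> y > 0" by simp
    obtain d1 where d1: "d1 > 0" "\<forall>z. dist z y < d1 \<longrightarrow> dist (\<psi> z) (\<psi> y) < \<psi> y"
    proof -
      have "\<forall>e>0. \<exists>d>0. \<forall>z. dist z y < d \<longrightarrow> dist (\<psi> z) (\<psi> y) < e"
        using cpsi[OF yb] unfolding continuous_at_eps_delta .
      then show ?thesis using pos that by blast
    qed
    obtain d2 where d2: "d2 > 0" "ball y d2 \<subseteq> ball x r" using openE[OF open_ball yb] by blast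
    obtain z where z: "z \<in> \<Omega>" "dist z y < min d1 d2"
    proof -
      have m: "min d1 d2 > 0" using d1(1) d2(1) by simp
      have "\<forall>e>0. \<exists>z\<in>\<Omega>. dist z y < e" using yc unfolding closure_approachable .
      then obtain z where "z \<in> \<Omega>" "dist z y < min d1 d2" using m by blast
      then show ?thesis using that by blast
    qed
    have "dist z y < d2" using z(2) by simp
    then have "dist y z < d2" by (simp add: dist_commute)
    then have "z \<in> ball y d2" by simp
    then have "z \<in> ball x r" using d2(2) by blast
    then have "z \<in> \<Omega> \<inter> ball x r" using z(1) by blast
    then have "\<psi> z < 0" unfolding OmB by blast
    moreover have "dist (\<psi> z) (\<psi> y) < \<psi> y" using d1(2)[rule_format, of z] z by simp
    ultimately show False by (simp add: dist_real_def abs_less_iff)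
  qed
  have psix: "\<psi> x = 0"
  proof -
    have "\<psi> x \<le> 0" using psile[OF xcl xb] .
    moreover have "\<not> \<psi> x < 0"
    proof
      assume "\<psi> x < 0"
      then have "x \<in> {y \<in> ball x r. \<psi> y < 0}" using xb by blast
      then have "x \<in> \<Omega> \<inter> ball x r" unfolding OmB .
      then show False using xnO by blast
    qed
    ultimately show ?thesis by simp
  qed
  have cg: "continuous (at x) g" using has_derivative_continuous[OF dg[OF xb]] .
  fix \<epsilon> :: real assume e: "\<epsilon> > 0"
  define e' where "e' = \<alpha> * \<epsilon> / 2"
  have e': "e' > 0" using al e by (simp add: e'_def)
  obtain \<rho>0 where \<rho>0: "\<rho>0 > 0" "\<forall>y. dist y x < \<rho>0 \<longrightarrow> dist (g y) (g x) < e'"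
  proof -
    have "\<forall>e>0. \<exists>d>0. \<forall>z. dist z x < d \<longrightarrow> dist (g z) (g x) < e"
      using cg unfolding continuous_at_eps_delta .
    then show ?thesis using e' that by blast
  qed
  define \<rho> where "\<rho> = min \<rho>0 r"
  have \<rho>: "\<rho> > 0" using \<rho>0 r by (simp add: \<rho>_def)
  have sub: "ball x \<rho> \<subseteq> ball x r" unfolding \<rho>_def by (rule subset_ball) simp
  define \<phi> where "\<phi> y = \<psi> y - inner a y" for y
  have deriv: "(\<phi> has_derivative (\<lambda>v. inner (g w - a) v)) (at w within ball x \<rho>)"
    if w: "w \<in> ball x \<rho>" for w
  proof -
    have wr: "w \<in> ball x r" using w sub by blast
    have d1: "(\<psi> has_derivative (\<lambda>v. inner (g w) v)) (at w)" by (rule dpsi[OF wr])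
    have d2: "((\<lambda>y. inner a y) has_derivative (\<lambda>v. inner a v)) (at w)"
      by (rule bounded_linear.has_derivative[OF bounded_linear_inner_right has_derivative_ident])
    have "(\<phi> has_derivative (\<lambda>v. inner (g w) v - inner a v)) (at w)"
      unfolding \<phi>_def by (rule has_derivative_diff[OF d1 d2])
    moreover have "(\<lambda>v. inner (g w) v - inner a v) = (\<lambda>v. inner (g w - a) v)"
      by (simp add: inner_diff_left)
    ultimately show ?thesis by (metis has_derivative_at_withinI)
  qed
  have bnd: "onorm (\<lambda>v. inner (g w - a) v) \<le> e'" if w: "w \<in> ball x \<rho>" for w
  proof -
    have "dist x w < \<rho>" using w by simp
    then have "dist w x < \<rho>0" unfolding \<rho>_def by (simp add: dist_commute)
    then have "dist (g w) (g x) < e'" using \<rho>0(2) by blast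
    then have ngw: "norm (g w - a) \<le> e'" unfolding a_def dist_norm by simp
    show ?thesis
    proof (rule onorm_le)
      fix v
      have "norm (inner (g w - a) v) \<le> norm (g w - a) * norm v"
        using Cauchy_Schwarz_ineq2[of "g w - a" v] by simp
      also have "\<dots> \<le> e' * norm v" using ngw by (simp add: mult_right_mono)
      finally show "norm (inner (g w - a) v) \<le> e' * norm v" .
    qed
  qed
  have mvt: "norm (\<phi> z - \<phi> y) \<le> e' * norm (z - y)" if "z \<in> ball x \<rho>" "y \<in> ball x \<rho>" for y z
    by (rule differentiable_bound[OF convex_ball deriv bnd that])
  have xr: "x \<in> ball x \<rho>" using \<rho> by simp
  have part1: "inner \<nu> (y - x) \<le> \<epsilon> * norm (y - x)" if "y \<in> closure \<Omega>" "norm (y - x) < \<rho>" for y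
  proof -
    have yb: "y \<in> ball x \<rho>" using that by (simp add: dist_norm norm_minus_commute)
    have "\<psi> y \<le> 0" using psile that(1) yb sub by auto
    moreover have "\<phi> y - \<phi> x \<ge> - (e' * norm (y - x))" using mvt[OF yb xr] by (simp add: abs_le_iff)
    ultimately have "inner a (y - x) \<le> e' * norm (y - x)"
      using psix by (simp add: \<phi>_def inner_diff_right)
    then have "inner \<nu> (y - x) \<le> e' * norm (y - x) / \<alpha>" using al by (simp add: nuin divide_right_mono)
    also have "\<dots> = (\<epsilon> / 2) * norm (y - x)" using al by (simp add: e'_def)
    also have "\<dots> \<le> \<epsilon> * norm (y - x)" using e by (simp add: mult_right_mono)
    finally show ?thesis .
  qed
  have part2: "z \<in> closure \<Omega>" if "norm (z - x) < \<rho>" "inner \<nu> (z - x) + \<epsilon> * norm (z - x) \<le> 0" for z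
  proof (cases "z = x")
    case True then show ?thesis using xcl by simp
  next
    case False
    have zb: "z \<in> ball x \<rho>" using that by (simp add: dist_norm norm_minus_commute)
    have nzp: "norm (z - x) > 0" using False by simp
    have "\<phi> z - \<phi> x \<le> e' * norm (z - x)" using mvt[OF zb xr] by (simp add: abs_le_iff)
    then have pz: "\<psi> z \<le> inner a (z - x) + e' * norm (z - x)"
      using psix by (simp add: \<phi>_def inner_diff_right)
    have "inner a (z - x) = \<alpha> * inner \<nu> (z - x)" using al by (simp add: nuin)
    also have "\<dots> \<le> \<alpha> * (- \<epsilon> * norm (z - x))" using that(2) al by (intro mult_left_mono) auto
    finally have "\<psi> z \<le> - (\<alpha> * \<epsilon> * norm (z - x)) + e' * norm (z - x)" using pz by simp
    also have "\<dots> = - (e' * norm (z - x))" by (simp add: e'_def algebra_simps)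
    also have "\<dots> < 0" using e' nzp by simp
    finally have "\<psi> z < 0" .
    then have "z \<in> {y \<in> ball x r. \<psi> y < 0}" using zb sub by blast
    then have "z \<in> \<Omega> \<inter> ball x r" unfolding OmB .
    then have "z \<in> \<Omega>" by blast
    then show ?thesis using closure_subset by blast
  qed
  show "\<exists>\<rho>>0. (\<forall>y\<in>closure \<Omega>. norm (y - x) < \<rho> \<longrightarrow> inner \<nu> (y - x) \<le> \<epsilon> * norm (y - x))
       \<and> (\<forall>z. norm (z - x) < \<rho> \<and> inner \<nu> (z - x) + \<epsilon> * norm (z - x) \<le> 0 \<longrightarrow> z \<in> closure \<Omega>)"
    using \<rho> part1 part2 by blast
qed

theorem lemma2p11:
  fixes \<Omega> :: "'a::euclidean_space set" and u :: "'a \<Rightarrow> real" and \<omega> :: "real \<Rightarrow> real"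
    and x \<nu> \<theta> :: 'a and L :: real
  assumes "open \<Omega>" and "bounded \<Omega>" and "C2_boundary \<Omega>"
    and "L-lipschitz_on (closure \<Omega>) u"
    and "modulus \<omega>" and "semiconcave_with (closure \<Omega>) \<omega> u"
    and "x \<in> frontier \<Omega>" and "outward_unit_normal \<Omega> x \<nu>"
    and "inner \<theta> \<nu> \<le> 0"
  shows "(\<exists>p\<in>superdiff (closure \<Omega>) u x. \<forall>q\<in>superdiff (closure \<Omega>) u x. inner p \<theta> \<le> inner q \<theta>)
    \<and> dini_upper (closure \<Omega>) u x \<theta> = ereal (INF p\<in>superdiff (closure \<Omega>) u x. inner p \<theta>)
    \<and> dini_lower (closure \<Omega>) u x \<theta> = ereal (INF p\<in>superdiff (closure \<Omega>) u x. inner p \<theta>)"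
proof -
  obtain r \<psi> g where ldf: "local_defining_fun \<Omega> x r \<psi> g" and nu: "\<nu> = g x /\<^sub>R norm (g x)"
    using assms(8) unfolding outward_unit_normal_def by blast
  have xK: "x \<in> closure \<Omega>" using assms(7) by (simp add: frontier_def)
  interpret SC "closure \<Omega>" u \<omega> L x \<nu>
  proof
    show "L-lipschitz_on (closure \<Omega>) u" by fact
    show "modulus \<omega>" by fact
    show "semiconcave_with (closure \<Omega>) \<omega> u" by fact
    show "x \<in> closure \<Omega>" by fact
    show "norm \<nu> = 1" by (rule geo_boundary(1)[OF assms(1) assms(7) ldf nu])
    show "\<And>\<epsilon>. \<epsilon> > 0 \<Longrightarrow> \<exists>\<rho>>0. (\<forall>y\<in>closure \<Omega>. norm (y - x) < \<rho> \<longrightarrow> inner \<nu> (y - x) \<le> \<epsilon> * norm (y - x))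
       \<and> (\<forall>z. norm (z - x) < \<rho> \<and> inner \<nu> (z - x) + \<epsilon> * norm (z - x) \<le> 0 \<longrightarrow> z \<in> closure \<Omega>)"
      by (rule geo_boundary(2)[OF assms(1) assms(7) ldf nu])
  qed
  show ?thesis using main[of \<theta>] assms(9) by (simp add: inner_commute)
qed



end
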